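(* Let $(X,d)$ be a geodesic metric space and $\epsilon\ge0$ such that for all $x,y\in X$, $s,t\ge0$ with $B(x,s)\cap B(y,t)\ne\emptyset$ there exist $\xi\in X$, $R\ge0$ with $d_H(B(x,s)\cap B(y,t),B(\xi,R))\le\epsilon$. Then for every $q\ge0$, all $x,y\in X$, every $q$-path $\mu$ from $x$ to $y$ and every geodesic $\gamma$ from $x$ to $y$, each point of $\mu$ lies within distance $2q+6\epsilon$ of some point of $\gamma$.
   Context: $B(x,r)=\{z\in X: d(x,z)\le r\}$ denotes the closed ball and $d_H$ the Hausdorff distance. For $q\ge0$, a $q$-path from $x$ to $y$ is a continuous path $\mu$ from $x$ to $y$ such that every point $z$ on $\mu$ satisfies $d(x,z)+d(z,y)\le d(x,y)+q$. *)

theory Defs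
  imports "HOL-Analysis.Analysis"
begin

text \<open>Hausdorff distance between nonempty bounded sets (convention 0 otherwise,
  as in the former HOL-Analysis constant hausdist). It is only applied to nonempty
  bounded sets below.\<close>
definition hausdorff_dist :: "'a::metric_space set \<Rightarrow> 'a set \<Rightarrow> real" where
  "hausdorff_dist S T =
     (if S \<noteq> {} \<and> T \<noteq> {} \<and> bounded S \<and> bounded T
      then max (SUP x\<in>S. infdist x T) (SUP y\<in>T. infdist y S) else 0)"

definition geodesic_from :: "'a::metric_space \<Rightarrow> 'a \<Rightarrow> (real \<Rightarrow> 'a) \<Rightarrow> bool" where
  "geodesic_from x y \<gamma> \<longleftrightarrow> \<gamma> 0 = x \<and> \<gamma> (dist x y) = y \<and>
     (\<forall>s\<in>{0..dist x y}. \<forall>t\<in>{0..dist x y}. dist (\<gamma> s) (\<gamma> t) = \<bar>s - t\<bar>)"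

definition geodesic_space :: "'a::metric_space itself \<Rightarrow> bool" where
  "geodesic_space _ \<longleftrightarrow> (\<forall>x y::'a. \<exists>\<gamma>. geodesic_from x y \<gamma>)"

definition q_path :: "real \<Rightarrow> 'a::metric_space \<Rightarrow> 'a \<Rightarrow> (real \<Rightarrow> 'a) \<Rightarrow> bool" where
  "q_path q x y \<mu> \<longleftrightarrow> path \<mu> \<and> pathstart \<mu> = x \<and> pathfinish \<mu> = y \<and>
     (\<forall>z\<in>path_image \<mu>. dist x z + dist z y \<le> dist x y + q)"

end

theory Submission imports Defs begin
lemma infdist_lessE:
  assumes "A \<noteq> {}" "infdist x A < r"
  shows "\<exists>a\<in>A. dist x a < r"
proof (rule ccontr)
  assume "\<not> ?thesis"
  then have "\<forall>a\<in>A. r \<le> dist x a" by (simp add: not_less)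
  then have "r \<le> (INF a\<in>A. dist x a)" using assms(1) by (intro cINF_greatest) simp_all
  also have "\<dots> = infdist x A" using assms(1) by (simp add: infdist_notempty)
  finally show False using assms(2) by simp
qed
lemma bdd_infdist:
  assumes "bounded S" "T \<noteq> {}"
  shows "bdd_above ((\<lambda>x. infdist x T) ` S)"
proof -
  obtain c e where ce: "\<forall>y\<in>S. dist c y \<le> e" using assms(1) unfolding bounded_def by auto
  obtain t where t: "t \<in> T" using assms(2) by auto
  have "infdist x T \<le> e + dist c t" if "x \<in> S" for x
  proof -
    have "infdist x T \<le> dist x t" using t by (rule infdist_le)
    also have "\<dots> \<le> dist c x + dist c t" by (metis dist_commute dist_triangle)
    finally show ?thesis using ce that by fastforce
  qed
  then show ?thesis by (intro bdd_aboveI[where M="e + dist c t"]) blast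
qed

lemma hd_left:
  assumes "S \<noteq> {}" "T \<noteq> {}" "bounded S" "bounded T" "hausdorff_dist S T \<le> e" "x \<in> S"
  shows "infdist x T \<le> e"
proof -
  have "infdist x T \<le> (SUP x\<in>S. infdist x T)"
    using assms(6) bdd_infdist[OF assms(3,2)] by (rule cSUP_upper)
  then show ?thesis using assms unfolding hausdorff_dist_def by simp
qed

lemma hd_right:
  assumes "S \<noteq> {}" "T \<noteq> {}" "bounded S" "bounded T" "hausdorff_dist S T \<le> e" "x \<in> T"
  shows "infdist x S \<le> e"
proof -
  have "infdist x S \<le> (SUP x\<in>T. infdist x S)"
    using assms(6) bdd_infdist[OF assms(4,1)] by (rule cSUP_upper)
  then show ?thesis using assms unfolding hausdorff_dist_def by simp
qed
theorem lemma3p4: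
  fixes \<epsilon> :: real
  assumes geo: "geodesic_space TYPE('a::metric_space)"
    and eps: "\<epsilon> \<ge> 0"
    and balls: "\<And>x y :: 'a. \<And>s t :: real. s \<ge> 0 \<Longrightarrow> t \<ge> 0 \<Longrightarrow>
        cball x s \<inter> cball y t \<noteq> {} \<Longrightarrow>
        \<exists>\<xi> R. R \<ge> 0 \<and> hausdorff_dist (cball x s \<inter> cball y t) (cball \<xi> R) \<le> \<epsilon>"
  shows "\<forall>q \<ge> 0. \<forall>x y :: 'a. \<forall>\<mu> \<gamma>. q_path q x y \<mu> \<longrightarrow> geodesic_from x y \<gamma> \<longrightarrow>
           (\<forall>z\<in>path_image \<mu>. \<exists>w\<in>\<gamma> ` {0..dist x y}. dist z w \<le> 2 * q + 6 * \<epsilon>)"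
proof (intro allI impI ballI)
  fix q :: real and x y :: 'a and \<mu> \<gamma> z
  assume q: "q \<ge> 0" and qp: "q_path q x y \<mu>" and g: "geodesic_from x y \<gamma>"
    and zin: "z \<in> path_image \<mu>"
  define D where "D = dist x y"
  define a where "a = dist x z"
  define b where "b = dist z y"
  have zq: "a + b \<le> D + q" using qp zin unfolding q_path_def a_def b_def D_def by auto
  have Dab: "D \<le> a + b" unfolding a_def b_def D_def by (rule dist_triangle)
  have g0: "\<gamma> 0 = x" and gD: "\<gamma> D = y"
    and giso: "\<And>s t. s \<in> {0..D} \<Longrightarrow> t \<in> {0..D} \<Longrightarrow> dist (\<gamma> s) (\<gamma> t) = \<bar>s - t\<bar>"
    using g unfolding geodesic_from_def D_def by auto
  have D0: "D \<ge> 0" unfolding D_def by simp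
  define \<Gamma> where "\<Gamma> = \<gamma> ` {0..D}"
  have main: "\<exists>w\<in>\<Gamma>. dist z w < 2 * q + 6 * (\<epsilon> + \<delta>)" if \<delta>: "\<delta> > 0" for \<delta>
  proof -
    define e where "e = \<epsilon> + \<delta>"
    have e0: "e > 0" using eps \<delta> e_def by auto
    show ?thesis
    proof (cases "D - a < e")
      case True
      have "dist z y < 2 * q + 6 * e" using True zq q e0 b_def by auto
      moreover have "y \<in> \<Gamma>" unfolding \<Gamma>_def using gD D0 by force
      ultimately show ?thesis unfolding e_def by auto
    next
      case False
      define I where "I = cball x a \<inter> cball y b"
      have zI: "z \<in> I" unfolding I_def a_def b_def by (simp add: dist_commute)
      have a0: "a \<ge> 0" "b \<ge> 0" unfolding a_def b_def by auto
      define r0 where "r0 = max 0 (D - b)"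
      have r0: "r0 \<in> {0..D}" "r0 \<le> a" "D - r0 \<le> b"
        using Dab D0 a0 unfolding r0_def by auto
      have "dist x (\<gamma> r0) = r0" using giso[of 0 r0] r0 g0 D0 by auto
      moreover have "dist (\<gamma> r0) y = D - r0" using giso[of r0 D] r0 gD D0 by auto
      ultimately have gI: "\<gamma> r0 \<in> I" unfolding I_def using r0 by (simp add: dist_commute)
      obtain \<xi> R where R: "R \<ge> 0" and H: "hausdorff_dist I (cball \<xi> R) \<le> \<epsilon>"
        using balls[OF a0] zI unfolding I_def by blast
      have Ine: "I \<noteq> {}" using zI by auto
      have Kne: "cball \<xi> R \<noteq> {}" using R by auto
      have Ib: "bounded I" unfolding I_def by auto
      have toK: "\<exists>u\<in>cball \<xi> R. dist p u < e" if "p \<in> I" for p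
      proof -
        have "infdist p (cball \<xi> R) < e"
          using hd_left[OF Ine Kne Ib bounded_cball H that] \<delta> e_def by linarith
        then show ?thesis by (rule infdist_lessE[OF Kne])
      qed
      have toI: "\<exists>p\<in>I. dist u p < e" if "u \<in> cball \<xi> R" for u
      proof -
        have "infdist u I < e"
          using hd_right[OF Ine Kne Ib bounded_cball H that] \<delta> e_def by linarith
        then show ?thesis by (rule infdist_lessE[OF Ine])
      qed
      have Ifar: "dist p y \<ge> D - a" if "p \<in> I" for p
        using that dist_triangle[of x y p] unfolding I_def D_def by auto
      obtain p0 where p0: "p0 \<in> I" "dist \<xi> p0 < e" using toI[of \<xi>] R by auto
      have xiy: "dist \<xi> y < b + e" using p0 dist_triangle[of \<xi> y p0] unfolding I_def
        by (auto simp: dist_commute)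
      have rad: "dist \<xi> u \<le> q + 2 * e" if u: "u \<in> cball \<xi> R" for u
      proof -
        define \<rho> where "\<rho> = dist \<xi> u"
        have \<rho>R: "\<rho> \<le> R" using u \<rho>_def by auto
        show ?thesis
        proof (cases "\<rho> \<le> dist \<xi> y")
          case True
          obtain h where h: "geodesic_from \<xi> y h" using geo unfolding geodesic_space_def by blast
          have h0: "h 0 = \<xi>" and hD: "h (dist \<xi> y) = y"
            and hiso: "\<And>s t. s \<in> {0..dist \<xi> y} \<Longrightarrow> t \<in> {0..dist \<xi> y} \<Longrightarrow>
                dist (h s) (h t) = \<bar>s - t\<bar>"
            using h unfolding geodesic_from_def by auto
          have \<rho>0: "\<rho> \<ge> 0" using \<rho>_def by auto
          have d1: "dist \<xi> (h \<rho>) = \<rho>" using hiso[of 0 \<rho>] h0 True \<rho>0 by auto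
          have d2: "dist (h \<rho>) y = dist \<xi> y - \<rho>" using hiso[of \<rho> "dist \<xi> y"] hD True \<rho>0 by auto
          have "h \<rho> \<in> cball \<xi> R" using d1 \<rho>R by auto
          then obtain p where p: "p \<in> I" "dist (h \<rho>) p < e" using toI by blast
          have "D - a \<le> dist p y" using Ifar p by auto
          also have "\<dots> \<le> dist p (h \<rho>) + dist (h \<rho>) y" by (rule dist_triangle)
          finally have "D - a < e + dist \<xi> y - \<rho>" using p d2 by (simp add: dist_commute)
          then show ?thesis using xiy zq \<rho>_def by linarith
        next
          case False
          then have "y \<in> cball \<xi> R" using \<rho>R by auto
          then obtain p where p: "p \<in> I" "dist y p < e" using toI by blast
          then have "D - a < e" using Ifar[OF p(1)] by (simp add: dist_commute)
          then show ?thesis using \<open>\<not> D - a < e\<close> by auto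
        qed
      qed
      obtain u1 where u1: "u1 \<in> cball \<xi> R" "dist z u1 < e" using toK zI by blast
      obtain u2 where u2: "u2 \<in> cball \<xi> R" "dist (\<gamma> r0) u2 < e" using toK gI by blast
      have t1: "dist z (\<gamma> r0) \<le> dist z u1 + dist u1 (\<gamma> r0)" by (rule dist_triangle)
      have t2: "dist u1 (\<gamma> r0) \<le> dist u1 \<xi> + dist \<xi> (\<gamma> r0)" by (rule dist_triangle)
      have t3: "dist \<xi> (\<gamma> r0) \<le> dist \<xi> u2 + dist u2 (\<gamma> r0)" by (rule dist_triangle)
      have "dist z (\<gamma> r0) \<le> dist z u1 + dist u1 \<xi> + dist \<xi> u2 + dist u2 (\<gamma> r0)"
        using t1 t2 t3 by linarith
      also have "\<dots> < 2 * q + 6 * e"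
      proof -
        have "dist u1 \<xi> \<le> q + 2 * e" using rad[OF u1(1)] by (simp add: dist_commute)
        moreover have "dist u2 (\<gamma> r0) < e" using u2(2) by (simp add: dist_commute)
        ultimately show ?thesis using u1(2) rad[OF u2(1)] by linarith
      qed
      finally have "dist z (\<gamma> r0) < 2 * q + 6 * e" .
      moreover have "\<gamma> r0 \<in> \<Gamma>" unfolding \<Gamma>_def using r0 by auto
      ultimately show ?thesis unfolding e_def by auto
    qed
  qed
  have cont: "continuous_on {0..D} \<gamma>"
    unfolding continuous_on_iff
  proof (intro ballI allI impI)
    fix s e :: real assume s: "s \<in> {0..D}" and e: "0 < e"
    show "\<exists>d>0. \<forall>t\<in>{0..D}. dist t s < d \<longrightarrow> dist (\<gamma> t) (\<gamma> s) < e"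
    proof (intro exI[of _ e] conjI ballI impI)
      fix t assume t: "t \<in> {0..D}" "dist t s < e"
      have "dist (\<gamma> t) (\<gamma> s) = \<bar>t - s\<bar>" using giso[OF t(1) s] .
      then show "dist (\<gamma> t) (\<gamma> s) < e" using t(2) by (simp add: dist_real_def)
    qed (rule e)
  qed
  have c1: "compact \<Gamma>" unfolding \<Gamma>_def by (rule compact_continuous_image[OF cont compact_Icc])
  have c2: "\<Gamma> \<noteq> {}" unfolding \<Gamma>_def using D0 by auto
  have c3: "continuous_on \<Gamma> (\<lambda>w. dist z w)" by (intro continuous_intros)
  obtain w0 where w0: "w0 \<in> \<Gamma>" "\<And>w. w \<in> \<Gamma> \<Longrightarrow> dist z w0 \<le> dist z w"
    using continuous_attains_inf[OF c1 c2 c3] by auto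
  have "dist z w0 \<le> 2 * q + 6 * \<epsilon>"
  proof (rule field_le_epsilon)
    fix d :: real assume d: "d > 0"
    obtain w where "w \<in> \<Gamma>" "dist z w < 2 * q + 6 * (\<epsilon> + d / 6)" using main[of "d/6"] d by auto
    then show "dist z w0 \<le> 2 * q + 6 * \<epsilon> + d" using w0(2)[of w] by simp
  qed
  then show "\<exists>w\<in>\<gamma> ` {0..dist x y}. dist z w \<le> 2 * q + 6 * \<epsilon>"
    using w0(1) unfolding \<Gamma>_def D_def by blast
qed

end
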